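(* Let $k$ be a positive integer, $a\ge 1$ an integer and $G=K_a\,\square\,K_a$. Then $\gamma_{P,k}(G)=a-k$ if $a\ge k+2$, and $\gamma_{P,k}(G)=1$ otherwise.
   Context: $K_a$ is the complete graph on $a$ vertices and $\square$ denotes the Cartesian product of graphs. $N_G[v]$ is the closed neighbourhood of $v$, and $N_G[S]$ the union of closed neighbourhoods of vertices of $S$. For $S\subseteq V(G)$, define $\mathcal{P}^{0}_{G,k}(S)=N_G[S]$ and $\mathcal{P}^{i+1}_{G,k}(S)=\bigcup\{N_G[v] : v\in \mathcal{P}^{i}_{G,k}(S),\ |N_G[v]\setminus \mathcal{P}^{i}_{G,k}(S)|\le k\}$; these increase and stabilize to $\mathcal{P}^{\infty}_{G,k}(S)$. $S$ is a $k$-power dominating set if $\mathcal{P}^{\infty}_{G,k}(S)=V(G)$; $\gamma_{P,k}(G)$ is the minimum size of such a set. *)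

theory Defs
  imports Main
begin

text \<open>A (simple) graph is given by a vertex set V and a symmetric irreflexive
adjacency relation E.\<close>

definition closed_nbhd :: "'a set \<Rightarrow> ('a \<Rightarrow> 'a \<Rightarrow> bool) \<Rightarrow> 'a \<Rightarrow> 'a set" where
  "closed_nbhd V E v = insert v {u \<in> V. E v u}"

definition closed_nbhd_set :: "'a set \<Rightarrow> ('a \<Rightarrow> 'a \<Rightarrow> bool) \<Rightarrow> 'a set \<Rightarrow> 'a set" where
  "closed_nbhd_set V E S = (\<Union>v\<in>S. closed_nbhd V E v)"

fun pow_obs :: "'a set \<Rightarrow> ('a \<Rightarrow> 'a \<Rightarrow> bool) \<Rightarrow> nat \<Rightarrow> 'a set \<Rightarrow> nat \<Rightarrow> 'a set" where
  "pow_obs V E k S 0 = closed_nbhd_set V E S"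
| "pow_obs V E k S (Suc i) =
     (\<Union>{closed_nbhd V E v | v. v \<in> pow_obs V E k S i \<and>
          card (closed_nbhd V E v - pow_obs V E k S i) \<le> k})"

definition pow_obs_inf :: "'a set \<Rightarrow> ('a \<Rightarrow> 'a \<Rightarrow> bool) \<Rightarrow> nat \<Rightarrow> 'a set \<Rightarrow> 'a set" where
  "pow_obs_inf V E k S = (\<Union>i. pow_obs V E k S i)"

definition k_pds :: "'a set \<Rightarrow> ('a \<Rightarrow> 'a \<Rightarrow> bool) \<Rightarrow> nat \<Rightarrow> 'a set \<Rightarrow> bool" where
  "k_pds V E k S \<longleftrightarrow> S \<subseteq> V \<and> pow_obs_inf V E k S = V"

definition k_power_domination_number :: "'a set \<Rightarrow> ('a \<Rightarrow> 'a \<Rightarrow> bool) \<Rightarrow> nat \<Rightarrow> nat" where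
  "k_power_domination_number V E k = (LEAST n. \<exists>S. k_pds V E k S \<and> card S = n)"

definition rook_vertices :: "nat \<Rightarrow> (nat \<times> nat) set" where
  "rook_vertices a = {0..<a} \<times> {0..<a}"

definition rook_adj :: "nat \<times> nat \<Rightarrow> nat \<times> nat \<Rightarrow> bool" where
  "rook_adj p q \<longleftrightarrow> (fst p = fst q \<and> snd p \<noteq> snd q) \<or> (snd p = snd q \<and> fst p \<noteq> fst q)"

end

theory Submission
  imports Defs
begin

lemma nbhd_eq:
  assumes "v \<in> rook_vertices a"
  shows "closed_nbhd (rook_vertices a) rook_adj v =
         {x \<in> rook_vertices a. fst x = fst v \<or> snd x = snd v}"
  using assms unfolding closed_nbhd_def rook_adj_def by (auto simp: prod_eq_iff)

lemma P0_eq: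
  assumes "S \<subseteq> rook_vertices a"
  shows "closed_nbhd_set (rook_vertices a) rook_adj S =
         {x \<in> rook_vertices a. fst x \<in> fst ` S \<or> snd x \<in> snd ` S}"
proof -
  have "\<And>v. v \<in> S \<Longrightarrow> closed_nbhd (rook_vertices a) rook_adj v =
         {x \<in> rook_vertices a. fst x = fst v \<or> snd x = snd v}"
    using assms nbhd_eq by blast
  then show ?thesis unfolding closed_nbhd_set_def by auto
qed

lemma pow_obs_sub:
  assumes "S \<subseteq> rook_vertices a"
  shows "pow_obs (rook_vertices a) rook_adj k S i \<subseteq> rook_vertices a"
proof (induction i)
  case 0
  then show ?case using P0_eq[OF assms] by auto
next
  case (Suc i)
  then show ?case using nbhd_eq by fastforce
qed

lemma empty_fail:
  "pow_obs V E k {} i = {}"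
  by (induction i) (auto simp: closed_nbhd_set_def)

lemma upper:
  assumes "1 \<le> m" "m \<le> a" "a \<le> m + k"
  shows "k_pds (rook_vertices a) rook_adj k ((\<lambda>i. (i,i)) ` {0..<m})"
proof -
  let ?V = "rook_vertices a"
  let ?S = "(\<lambda>i. (i,i)) ` {0..<m}"
  have SV: "?S \<subseteq> ?V" using assms unfolding rook_vertices_def by auto
  have P0: "pow_obs ?V rook_adj k ?S 0 = {x \<in> ?V. fst x < m \<or> snd x < m}"
    using P0_eq[OF SV] by (auto simp: image_image)
  have "?V \<subseteq> pow_obs ?V rook_adj k ?S 1"
  proof
    fix x assume x: "x \<in> ?V"
    obtain r c where xrc: "x = (r,c)" by fastforce
    have c: "c < a" using x xrc unfolding rook_vertices_def by auto
    have v: "(0,c) \<in> ?V" using c assms unfolding rook_vertices_def by auto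
    have vP: "(0,c) \<in> pow_obs ?V rook_adj k ?S 0" using P0 v assms by auto
    have "closed_nbhd ?V rook_adj (0,c) - pow_obs ?V rook_adj k ?S 0 \<subseteq> {m..<a} \<times> {c}"
      using P0 nbhd_eq[OF v] assms unfolding rook_vertices_def by auto
    then have "card (closed_nbhd ?V rook_adj (0,c) - pow_obs ?V rook_adj k ?S 0) \<le> card ({m..<a} \<times> {c})"
      by (intro card_mono) auto
    also have "\<dots> \<le> k" using assms by (simp add: card_cartesian_product)
    finally have "card (closed_nbhd ?V rook_adj (0,c) - pow_obs ?V rook_adj k ?S 0) \<le> k" .
    moreover have "x \<in> closed_nbhd ?V rook_adj (0,c)" using nbhd_eq[OF v] x xrc by auto
    ultimately show "x \<in> pow_obs ?V rook_adj k ?S 1" using vP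
      by (auto simp del: pow_obs.simps(1) intro!: exI[of _ "closed_nbhd ?V rook_adj (0,c)"])
  qed
  moreover have "pow_obs_inf ?V rook_adj k ?S \<subseteq> ?V"
    unfolding pow_obs_inf_def using pow_obs_sub[OF SV] by blast
  ultimately show ?thesis unfolding k_pds_def pow_obs_inf_def using SV by blast
qed

lemma lower:
  assumes SV: "S \<subseteq> rook_vertices a" and cs: "card S + k < a"
  shows "\<not> k_pds (rook_vertices a) rook_adj k S"
proof
  assume kp: "k_pds (rook_vertices a) rook_adj k S"
  let ?V = "rook_vertices a"
  let ?R = "fst ` S" and ?C = "snd ` S"
  have finV: "finite ?V" unfolding rook_vertices_def by auto
  have finS: "finite S" using finV SV finite_subset by blast
  have cR: "card ?R \<le> card S" and cC: "card ?C \<le> card S" using finS card_image_le by auto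
  define P0 where "P0 = {x \<in> ?V. fst x \<in> ?R \<or> snd x \<in> ?C}"
  have finR: "finite ?R" "finite ?C" using finS by auto
  have cardR: "card ({0..<a} - ?R) > k"
  proof -
    have "card ({0..<a} - ?R) \<ge> a - card ?R"
      using finR diff_card_le_card_Diff[of ?R "{0..<a}"] by simp
    then show ?thesis using cR cs by linarith
  qed
  have cardC: "card ({0..<a} - ?C) > k"
  proof -
    have "card ({0..<a} - ?C) \<ge> a - card ?C"
      using finR diff_card_le_card_Diff[of ?C "{0..<a}"] by simp
    then show ?thesis using cC cs by linarith
  qed
  have step: "closed_nbhd ?V rook_adj v \<subseteq> P0"
    if vP: "v \<in> P0" and small: "card (closed_nbhd ?V rook_adj v - P0) \<le> k" for v
  proof -
    have vV: "v \<in> ?V" using vP P0_def by auto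
    have fin: "finite (closed_nbhd ?V rook_adj v - P0)" using nbhd_eq[OF vV] finV by auto
    show ?thesis
    proof (cases "fst v \<in> ?R")
      case True
      show ?thesis
      proof (cases "snd v \<in> ?C")
        case True
        show ?thesis
        proof
          fix x assume "x \<in> closed_nbhd ?V rook_adj v"
          then have "x \<in> ?V" "fst x = fst v \<or> snd x = snd v" using nbhd_eq[OF vV] by auto
          then show "x \<in> P0" using \<open>fst v \<in> ?R\<close> \<open>snd v \<in> ?C\<close> unfolding P0_def by (elim disjE) simp_all
        qed
      next
        case False
        have "({0..<a} - ?R) \<times> {snd v} \<subseteq> closed_nbhd ?V rook_adj v - P0"
          using False vV nbhd_eq[OF vV] unfolding P0_def rook_vertices_def by (auto simp: image_iff; metis fst_conv snd_conv)
        then have "card (({0..<a} - ?R) \<times> {snd v}) \<le> k"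
          using card_mono[OF fin] small le_trans by blast
        then show ?thesis using cardR by (simp add: card_cartesian_product)
      qed
    next
      case False
      then have sC: "snd v \<in> ?C" using vP P0_def by auto
      have "{fst v} \<times> ({0..<a} - ?C) \<subseteq> closed_nbhd ?V rook_adj v - P0"
        using False vV nbhd_eq[OF vV] unfolding P0_def rook_vertices_def by (auto simp: image_iff; metis fst_conv snd_conv)
      then have "card ({fst v} \<times> ({0..<a} - ?C)) \<le> k"
        using card_mono[OF fin] small le_trans by blast
      then show ?thesis using cardC by (simp add: card_cartesian_product)
    qed
  qed
  have all: "pow_obs ?V rook_adj k S i \<subseteq> P0" for i
  proof (induction i)
    case 0
    then show ?case using P0_eq[OF SV] P0_def by simp
  next
    case (Suc i)
    show ?case
    proof
      fix x assume "x \<in> pow_obs ?V rook_adj k S (Suc i)"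
      then obtain v where v: "v \<in> pow_obs ?V rook_adj k S i"
        "card (closed_nbhd ?V rook_adj v - pow_obs ?V rook_adj k S i) \<le> k"
        "x \<in> closed_nbhd ?V rook_adj v" by auto
      have vV: "v \<in> ?V" using v(1) Suc P0_def by auto
      have fin: "finite (closed_nbhd ?V rook_adj v - pow_obs ?V rook_adj k S i)"
        using nbhd_eq[OF vV] finV by auto
      have "card (closed_nbhd ?V rook_adj v - P0) \<le> k"
      proof -
        have "closed_nbhd ?V rook_adj v - P0 \<subseteq> closed_nbhd ?V rook_adj v - pow_obs ?V rook_adj k S i"
          using Suc by blast
        then show ?thesis using card_mono[OF fin] v(2) le_trans by blast
      qed
      then show "x \<in> P0" using step v(1,3) Suc by blast
    qed
  qed
  have "{0..<a} - ?R \<noteq> {}" "{0..<a} - ?C \<noteq> {}" using cardR cardC by (metis card.empty not_less0)+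
  then obtain r c where r: "r \<in> {0..<a} - ?R" and c: "c \<in> {0..<a} - ?C" by blast
  have "(r,c) \<in> ?V" using r c unfolding rook_vertices_def by auto
  moreover have "(r,c) \<notin> P0" using r c P0_def by auto
  ultimately show False using kp all unfolding k_pds_def pow_obs_inf_def by blast
qed

theorem mainTheorem5:
  fixes k a :: nat
  assumes "k \<ge> 1" and "a \<ge> 1"
  shows "k_power_domination_number (rook_vertices a) rook_adj k =
           (if a \<ge> k + 2 then a - k else 1)"
proof -
  define m where "m = (if a \<ge> k + 2 then a - k else 1)"
  have m: "1 \<le> m" "m \<le> a" "a \<le> m + k" using assms unfolding m_def by auto
  have cm: "card ((\<lambda>i. (i,i)) ` {0..<m}) = m"
    by (subst card_image) (auto simp: inj_on_def)
  have ex: "\<exists>S. k_pds (rook_vertices a) rook_adj k S \<and> card S = m"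
    using upper[OF m] cm by blast
  have lb: "m \<le> n" if "\<exists>S. k_pds (rook_vertices a) rook_adj k S \<and> card S = n" for n
  proof (rule ccontr)
    assume "\<not> m \<le> n"
    from that obtain S where S: "k_pds (rook_vertices a) rook_adj k S" "card S = n" by blast
    have SV: "S \<subseteq> rook_vertices a" using S(1) unfolding k_pds_def by blast
    show False
    proof (cases "a \<ge> k + 2")
      case True
      then have "card S + k < a" using \<open>\<not> m \<le> n\<close> S m_def by auto
      then show False using lower[OF SV] S by blast
    next
      case False
      then have "n = 0" using \<open>\<not> m \<le> n\<close> m_def by auto
      moreover have "finite S" using SV finite_subset unfolding rook_vertices_def by blast
      ultimately have "S = {}" using S by auto
      moreover have "(0,0) \<in> rook_vertices a" using assms unfolding rook_vertices_def by auto
      moreover have "pow_obs_inf (rook_vertices a) rook_adj k {} = {}"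
        by (simp add: pow_obs_inf_def empty_fail)
      ultimately have "rook_vertices a = {}" using S(1) unfolding k_pds_def by simp
      then show False using \<open>(0,0) \<in> rook_vertices a\<close> by simp
    qed
  qed
  show ?thesis unfolding k_power_domination_number_def m_def[symmetric]
    using ex lb by (intro Least_equality) auto
qed

end
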